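(* Let $X$ be a Fréchet space, let $\Gamma:[0,1]\to ck(X)$ be Pettis integrable in $ck(X)$, and let $G:[0,1]\to ck(X)$ be scalarly measurable with $G(t)\subseteq\Gamma(t)$ for all $t\in[0,1]$. Then $G$ is Pettis integrable in $ck(X)$.
   Context: $X$ is a Fréchet space, $X^*$ its dual, $ck(X)$ the nonempty compact convex subsets of $X$, $\sigma(x^*,C)=\sup_{x\in C}\langle x^*,x\rangle$. Scalarly measurable: $t\mapsto\sigma(x^*,G(t))$ measurable for each $x^*\in X^*$. Pettis integrable in $ck(X)$: $\sigma(x^*,\Gamma(\cdot))$ Lebesgue integrable for each $x^*$, and for every Lebesgue measurable $E\subseteq[0,1]$ there is $x_E\in ck(X)$ with $\sigma(x^*,x_E)=\int_E\sigma(x^*,\Gamma(t))dt$ for all $x^*\in X^*$. *)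

theory Defs
  imports "HOL-Analysis.Analysis" "HOL-Probability.Probability"
begin

text \<open>A Frechet space is modelled as a real vector space (a type) together with a
countable separating family of seminorms p 0, p 1, ..., which is complete for the
canonical translation-invariant metric generated by the seminorms. Its topology is
the induced metric topology (equivalently, the locally convex topology of the seminorms).\<close>

definition seminorm :: "('a::real_vector \<Rightarrow> real) \<Rightarrow> bool" where
  "seminorm q \<longleftrightarrow> (\<forall>x y. q (x + y) \<le> q x + q y) \<and> (\<forall>c x. q (c *\<^sub>R x) = \<bar>c\<bar> * q x)"

definition fr_dist :: "(nat \<Rightarrow> 'a::real_vector \<Rightarrow> real) \<Rightarrow> 'a \<Rightarrow> 'a \<Rightarrow> real" where
  "fr_dist p x y = (\<Sum>n. (1/2)^n * min 1 (p n (x - y)))"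

definition fr_top :: "(nat \<Rightarrow> 'a::real_vector \<Rightarrow> real) \<Rightarrow> 'a topology" where
  "fr_top p = Metric_space.mtopology UNIV (fr_dist p)"

definition frechet :: "(nat \<Rightarrow> 'a::real_vector \<Rightarrow> real) \<Rightarrow> bool" where
  "frechet p \<longleftrightarrow> (\<forall>n. seminorm (p n)) \<and> (\<forall>x. (\<forall>n. p n x = 0) \<longrightarrow> x = 0)
     \<and> Metric_space UNIV (fr_dist p) \<and> Metric_space.mcomplete UNIV (fr_dist p)"

definition fr_dual :: "(nat \<Rightarrow> 'a::real_vector \<Rightarrow> real) \<Rightarrow> ('a \<Rightarrow> real) set" where
  "fr_dual p = {f. linear f \<and> continuous_map (fr_top p) euclideanreal f}"

definition ck :: "(nat \<Rightarrow> 'a::real_vector \<Rightarrow> real) \<Rightarrow> 'a set set" where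
  "ck p = {C. C \<noteq> {} \<and> compactin (fr_top p) C \<and> convex C}"

definition supp_fun :: "('a \<Rightarrow> real) \<Rightarrow> 'a set \<Rightarrow> real" where
  "supp_fun f C = (SUP x\<in>C. f x)"

definition scalarly_measurable ::
  "(nat \<Rightarrow> 'a::real_vector \<Rightarrow> real) \<Rightarrow> (real \<Rightarrow> 'a set) \<Rightarrow> bool" where
  "scalarly_measurable p G \<longleftrightarrow>
     (\<forall>f\<in>fr_dual p. (\<lambda>t. supp_fun f (G t)) \<in> borel_measurable (restrict_space lebesgue {0..1}))"

definition pettis_ck ::
  "(nat \<Rightarrow> 'a::real_vector \<Rightarrow> real) \<Rightarrow> (real \<Rightarrow> 'a set) \<Rightarrow> bool" where
  "pettis_ck p \<Gamma> \<longleftrightarrow>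
     (\<forall>t\<in>{0..1}. \<Gamma> t \<in> ck p) \<and>
     (\<forall>f\<in>fr_dual p. set_integrable lebesgue {0..1} (\<lambda>t. supp_fun f (\<Gamma> t))) \<and>
     (\<forall>E. E \<in> sets lebesgue \<and> E \<subseteq> {0..1} \<longrightarrow>
        (\<exists>C\<in>ck p. \<forall>f\<in>fr_dual p. supp_fun f C = (LINT t:E|lebesgue. supp_fun f (\<Gamma> t))))"

end

theory Submission imports Defs begin

lemma dual_cont: "g \<in> fr_dual p \<Longrightarrow> continuous_map (fr_top p) euclideanreal g"
  by (simp add: fr_dual_def)
lemma dual_lin: "g \<in> fr_dual p \<Longrightarrow> linear g"
  by (simp add: fr_dual_def)

lemma dual_add: "f \<in> fr_dual p \<Longrightarrow> g \<in> fr_dual p \<Longrightarrow> (\<lambda>x. f x + g x) \<in> fr_dual p"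
  unfolding fr_dual_def by (auto intro: linear_compose_add continuous_map_add)

lemma dual_scale:
  assumes "f \<in> fr_dual p" shows "(\<lambda>x. c * f x) \<in> fr_dual p"
proof -
  have f: "linear f" "continuous_map (fr_top p) euclideanreal f" using assms by (auto simp: fr_dual_def)
  have "linear (\<lambda>x. c * f x)" using f(1) by (intro linearI) (auto simp: linear_add linear_scale algebra_simps)
  then show ?thesis using f(2) continuous_map_real_mult_left by (auto simp: fr_dual_def)
qed

lemma dual_zero: "(\<lambda>x. 0) \<in> fr_dual p"
  unfolding fr_dual_def by (auto simp: linear_zero)

lemma aff_cont: "g \<in> fr_dual p \<Longrightarrow> continuous_map (fr_top p) euclideanreal (\<lambda>x. g x + c)"
  using continuous_map_add[OF dual_cont[of g p], of "\<lambda>x. c"] by auto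

lemma compact_le:
  assumes "compactin X K" "continuous_map X euclideanreal u"
  shows "compactin X {x\<in>K. u x \<le> c}"
proof -
  have "{x\<in>K. u x \<le> c} = K \<inter> {x \<in> topspace X. u x \<in> {..c}}"
    using compactin_subset_topspace[OF assms(1)] by auto
  moreover have "closedin X {x \<in> topspace X. u x \<in> {..c}}"
    by (rule closedin_continuous_map_preimage[OF assms(2)]) auto
  ultimately show ?thesis using compact_Int_closedin assms(1) by metis
qed

lemma compact_ge:
  assumes "compactin X K" "continuous_map X euclideanreal u"
  shows "compactin X {x\<in>K. c \<le> u x}"
proof -
  have "{x\<in>K. c \<le> u x} = K \<inter> {x \<in> topspace X. u x \<in> {c..}}"
    using compactin_subset_topspace[OF assms(1)] by auto
  moreover have "closedin X {x \<in> topspace X. u x \<in> {c..}}"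
    by (rule closedin_continuous_map_preimage[OF assms(2)]) auto
  ultimately show ?thesis using compact_Int_closedin assms(1) by metis
qed

lemma attain_max:
  assumes "compactin X S" "S \<noteq> {}" "continuous_map (subtopology X S) euclideanreal u"
  shows "\<exists>x\<in>S. \<forall>y\<in>S. u y \<le> u x"
proof -
  have "compactin (subtopology X S) S" using assms(1) by (simp add: compactin_subtopology)
  then have "compactin euclideanreal (u ` S)" using image_compactin assms(3) by blast
  then have "compact (u ` S)" by simp
  then obtain m where "m \<in> u ` S" "\<forall>y\<in>u ` S. y \<le> m"
    using compact_attains_sup assms(2) by (metis image_is_empty)
  then show ?thesis by auto
qed

lemma attain_min:
  assumes "compactin X S" "S \<noteq> {}" "continuous_map (subtopology X S) euclideanreal u"
  shows "\<exists>x\<in>S. \<forall>y\<in>S. u x \<le> u y"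
proof -
  have "continuous_map (subtopology X S) euclideanreal (\<lambda>x. - u x)"
    using assms(3) by simp
  from attain_max[OF assms(1,2) this] show ?thesis by auto
qed

lemma cont_sub: "continuous_map X Y u \<Longrightarrow> continuous_map (subtopology X S) Y u"
  by (simp add: continuous_map_from_subtopology)

lemma two_case:
  assumes K: "compactin (fr_top p) K" "convex K"
    and g: "g \<in> fr_dual p" and h: "h \<in> fr_dual p"
    and pos: "\<And>x. x\<in>K \<Longrightarrow> g x + a > 0 \<or> h x + b > 0"
  shows "\<exists>t\<in>{0..1}. \<forall>x\<in>K. t * (g x + a) + (1-t) * (h x + b) > 0"
proof -
  define u where "u x = g x + a" for x
  define w where "w x = h x + b" for x
  have ucont: "continuous_map (fr_top p) euclideanreal u" unfolding u_def by (rule aff_cont[OF g])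
  have wcont: "continuous_map (fr_top p) euclideanreal w" unfolding w_def by (rule aff_cont[OF h])
  have uaff: "\<And>x y l. u (l *\<^sub>R x + (1-l) *\<^sub>R y) = l * u x + (1-l) * u y"
    unfolding u_def linear_add[OF dual_lin[OF g]] linear_scale[OF dual_lin[OF g]] by (simp add: algebra_simps)
  have waff: "\<And>x y l. w (l *\<^sub>R x + (1-l) *\<^sub>R y) = l * w x + (1-l) * w y"
    unfolding w_def linear_add[OF dual_lin[OF h]] linear_scale[OF dual_lin[OF h]] by (simp add: algebra_simps)
  have posuw: "\<And>x. x\<in>K \<Longrightarrow> u x > 0 \<or> w x > 0" using pos by (simp add: u_def w_def)
  define A where "A = {x\<in>K. u x \<le> 0}"
  define B where "B = {x\<in>K. w x \<le> 0}"
  show ?thesis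
  proof (cases "A = {}")
    case True then have "\<forall>x\<in>K. u x > 0" by (auto simp: A_def)
    then show ?thesis by (intro bexI[of _ 1]) (auto simp: u_def)
  next
    case Ane: False
    show ?thesis
    proof (cases "B = {}")
      case True then have "\<forall>x\<in>K. w x > 0" by (auto simp: B_def)
      then show ?thesis by (intro bexI[of _ 0]) (auto simp: w_def)
    next
      case Bne: False
      have Bc: "compactin (fr_top p) B" unfolding B_def by (rule compact_le[OF K(1) wcont])
      have Ac: "compactin (fr_top p) A" unfolding A_def by (rule compact_le[OF K(1) ucont])
      have uB: "\<And>x. x\<in>B \<Longrightarrow> u x > 0" using posuw by (force simp: B_def)
      have wA: "\<And>x. x\<in>A \<Longrightarrow> w x > 0" using posuw by (force simp: A_def)
      define s where "s x = - w x / u x" for x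
      have "continuous_map (subtopology (fr_top p) B) euclideanreal s"
        unfolding s_def
        by (intro continuous_map_real_divide continuous_map_minus cont_sub ucont wcont)
           (use uB in force)+
      then obtain b0 where b0: "b0\<in>B" "\<And>y. y\<in>B \<Longrightarrow> s y \<le> s b0"
        using attain_max[OF Bc Bne] by blast
      define s0 where "s0 = s b0"
      have ub0: "u b0 > 0" "w b0 \<le> 0" "b0 \<in> K" using b0(1) uB by (auto simp: B_def)
      have s0: "s0 \<ge> 0" unfolding s0_def s_def using ub0 by (simp add: divide_nonpos_pos)
      have keyA: "w a + s0 * u a > 0" if a: "a \<in> A" for a
      proof (rule ccontr)
        assume ng: "\<not> w a + s0 * u a > 0"
        have ua: "u a \<le> 0" "w a > 0" "a \<in> K" using a wA by (auto simp: A_def)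
        have ua': "u a < 0"
        proof (rule ccontr)
          assume "\<not> u a < 0" then have "u a = 0" using ua by simp
          then show False using ng ua by simp
        qed
        have ng2: "w a * u b0 - w b0 * u a \<le> 0"
        proof -
          have "(w a + s0 * u a) * u b0 \<le> 0" using ng ub0 by (simp add: mult_nonpos_nonneg)
          moreover have "(w a + s0 * u a) * u b0 = w a * u b0 - w b0 * u a"
            unfolding s0_def s_def using ub0 by (simp add: field_simps)
          ultimately show ?thesis by simp
        qed
        define l where "l = u b0 / (u b0 - u a)"
        have d: "u b0 - u a > 0" using ua' ub0 by simp
        have l01: "0 \<le> l" "l \<le> 1" unfolding l_def using d ua' ub0 by (auto simp: field_simps)
        define x where "x = l *\<^sub>R a + (1-l) *\<^sub>R b0"
        have xK: "x \<in> K" unfolding x_def using K(2) ua(3) ub0(3) l01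
          by (simp add: convex_def)
        have "u x = 0" unfolding x_def uaff l_def using d by (simp add: field_simps)
        moreover have "w x \<le> 0"
        proof -
          have "(u b0 - u a) * w x = u b0 * w a - u a * w b0"
          proof -
            have l1: "1 - l = - u a / (u b0 - u a)" unfolding l_def using d by (simp add: field_simps)
            have "w x = l * w a + (1 - l) * w b0" unfolding x_def waff ..
            also have "\<dots> = (u b0 * w a - u a * w b0) / (u b0 - u a)"
              unfolding l1 unfolding l_def by (simp add: add_divide_distrib diff_divide_distrib)
            finally show ?thesis using d by simp
          qed
          then have "(u b0 - u a) * w x \<le> 0" using ng2 by (simp add: algebra_simps)
          then show ?thesis using d by (simp add: mult_le_0_iff)
        qed
        ultimately show False using posuw[OF xK] by simp
      qed
      define v where "v x = w x + s0 * u x" for x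
      have vcont: "continuous_map (fr_top p) euclideanreal v"
        unfolding v_def by (intro continuous_map_add continuous_map_real_mult_left ucont wcont)
      obtain a1 where a1: "a1\<in>A" "\<And>y. y\<in>A \<Longrightarrow> v a1 \<le> v y"
        using attain_min[OF Ac Ane cont_sub[OF vcont]] by blast
      obtain a2 where a2: "a2\<in>A" "\<And>y. y\<in>A \<Longrightarrow> u a2 \<le> u y"
        using attain_min[OF Ac Ane cont_sub[OF ucont]] by blast
      define \<delta> where "\<delta> = v a1"
      have \<delta>: "\<delta> > 0" unfolding \<delta>_def v_def using keyA[OF a1(1)] .
      have ua2: "u a2 \<le> 0" using a2(1) by (simp add: A_def)
      define \<epsilon> where "\<epsilon> = \<delta> / (1 - u a2)"
      have \<epsilon>: "\<epsilon> > 0" unfolding \<epsilon>_def using \<delta> ua2 by simp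
      have \<epsilon>2: "\<epsilon> * u a2 > - \<delta>"
      proof -
        have "\<epsilon> * u a2 + \<delta> = \<delta> / (1 - u a2)" unfolding \<epsilon>_def using ua2 by (simp add: field_simps)
        then show ?thesis using \<delta> ua2 by (smt (verit) divide_pos_pos)
      qed
      define c where "c = s0 + \<epsilon>"
      have c: "c > 0" using s0 \<epsilon> by (simp add: c_def)
      have allpos: "w x + c * u x > 0" if x: "x\<in>K" for x
      proof (cases "u x \<le> 0")
        case True
        then have xA: "x \<in> A" using x by (simp add: A_def)
        have "v x \<ge> \<delta>" using a1(2)[OF xA] by (simp add: \<delta>_def)
        moreover have "\<epsilon> * u x \<ge> \<epsilon> * u a2" using a2(2)[OF xA] \<epsilon> by simp
        ultimately show ?thesis using \<epsilon>2 unfolding v_def c_def by (simp add: algebra_simps)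
      next
        case False
        then have ux: "u x > 0" by simp
        show ?thesis
        proof (cases "w x \<le> 0")
          case True
          then have "x \<in> B" using x by (simp add: B_def)
          then have "s x \<le> s0" using b0(2) by (simp add: s0_def)
          then have "- w x \<le> s0 * u x" unfolding s_def using ux by (simp add: field_simps)
          moreover have "\<epsilon> * u x > 0" using ux \<epsilon> by simp
          ultimately show ?thesis unfolding c_def by (simp add: algebra_simps)
        next
          case False
          then show ?thesis using ux c by (simp add: add_pos_pos)
        qed
      qed
      show ?thesis
      proof (intro bexI[of _ "c / (1 + c)"] ballI)
        fix x assume x: "x \<in> K"
        have "c / (1 + c) * u x + (1 - c / (1 + c)) * w x = (w x + c * u x) / (1 + c)"
        proof -
          have c1: "1 + c \<noteq> 0" using c by simp
          have "1 - c / (1 + c) = 1 / (1 + c)" using c1 by (simp add: field_simps)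
          then have "c / (1 + c) * u x + (1 - c / (1 + c)) * w x = c / (1 + c) * u x + 1 / (1 + c) * w x"
            by simp
          also have "\<dots> = (c * u x + w x) / (1 + c)" by (simp add: add_divide_distrib)
          finally show ?thesis by (simp add: add.commute)
        qed
        also have "\<dots> > 0" using allpos[OF x] c by simp
        finally show "c / (1 + c) * (g x + a) + (1 - c / (1 + c)) * (h x + b) > 0"
          by (simp add: u_def w_def)
      next
        show "c / (1 + c) \<in> {0..1}" using c by simp
      qed
    qed
  qed
qed


lemma convex_halfspace_K:
  assumes "convex K" "g \<in> fr_dual p"
  shows "convex {x\<in>K. g x + c \<le> 0}"
  unfolding convex_def
proof (intro ballI allI impI)
  fix x y and s t :: real
  assume x: "x \<in> {x\<in>K. g x + c \<le> 0}" and y: "y \<in> {x\<in>K. g x + c \<le> 0}" and st: "0 \<le> s" "0 \<le> t" "s + t = 1"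
  have lin: "linear g" using dual_lin[OF assms(2)] .
  have "s *\<^sub>R x + t *\<^sub>R y \<in> K" using assms(1) x y st by (simp add: convex_def)
  moreover have "g (s *\<^sub>R x + t *\<^sub>R y) + c = s * (g x + c) + t * (g y + c)"
    proof -
    have "c = c * (s + t)" using st by simp
    then show ?thesis unfolding linear_add[OF lin] linear_scale[OF lin] by (simp add: algebra_simps)
  qed
  moreover have "s * (g x + c) + t * (g y + c) \<le> 0"
    using x y st by (simp add: add_nonpos_nonpos mult_nonneg_nonpos)
  ultimately show "s *\<^sub>R x + t *\<^sub>R y \<in> {x\<in>K. g x + c \<le> 0}" by simp
qed

lemma minimax:
  assumes Pconv: "\<And>g c h d t. (g,c)\<in>P \<Longrightarrow> (h,d)\<in>P \<Longrightarrow> t\<in>{0..1} \<Longrightarrow>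
       ((\<lambda>x. t * g x + (1-t) * h x), t*c + (1-t)*d) \<in> P"
    and Pdual: "\<And>g c. (g,c)\<in>P \<Longrightarrow> g \<in> fr_dual p"
  shows "finite S \<Longrightarrow> S \<noteq> {} \<Longrightarrow> S \<subseteq> P \<Longrightarrow> compactin (fr_top p) K \<Longrightarrow> convex K \<Longrightarrow>
     (\<forall>x\<in>K. \<exists>(g,c)\<in>S. g x + c > 0) \<Longrightarrow> \<exists>(g,c)\<in>P. \<forall>x\<in>K. g x + c > 0"
proof (induction S arbitrary: K rule: finite_ne_induct)
  case (singleton e)
  then show ?case by (cases e) auto
next
  case (insert e F)
  obtain g c where e: "e = (g,c)" by (cases e)
  have gP: "(g,c) \<in> P" using insert.prems e by auto
  have g: "g \<in> fr_dual p" using Pdual[OF gP] .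
  define K' where "K' = {x\<in>K. g x + c \<le> 0}"
  have K'c: "compactin (fr_top p) K'" unfolding K'_def
    by (rule compact_le[OF insert.prems(2) aff_cont[OF g]])
  have K'v: "convex K'" unfolding K'_def by (rule convex_halfspace_K[OF insert.prems(3) g])
  have "\<forall>x\<in>K'. \<exists>(h,d)\<in>F. h x + d > 0"
    using insert.prems(4) e unfolding K'_def by fastforce
  then obtain h d where hP: "(h,d) \<in> P" and hpos: "\<forall>x\<in>K'. h x + d > 0"
    using insert.IH[OF _ K'c K'v] insert.prems(1) by blast
  have h: "h \<in> fr_dual p" using Pdual[OF hP] .
  have "\<And>x. x\<in>K \<Longrightarrow> g x + c > 0 \<or> h x + d > 0"
    using hpos unfolding K'_def by force
  then obtain t where t: "t\<in>{0..1}" "\<forall>x\<in>K. t * (g x + c) + (1-t) * (h x + d) > 0"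
    using two_case[OF insert.prems(2,3) g h] by blast
  have "((\<lambda>x. t * g x + (1-t) * h x), t*c + (1-t)*d) \<in> P" using Pconv[OF gP hP t(1)] .
  moreover have "\<forall>x\<in>K. t * g x + (1-t) * h x + (t*c + (1-t)*d) > 0"
    using t(2) by (simp add: algebra_simps)
  ultimately show ?case by (intro bexI[of _ "((\<lambda>x. t * g x + (1-t) * h x), t*c + (1-t)*d)"]) auto
qed


lemma supp_attain:
  assumes K: "compactin (fr_top p) K" "convex K" "K \<noteq> {}"
    and sub: "\<And>g h. g\<in>fr_dual p \<Longrightarrow> h\<in>fr_dual p \<Longrightarrow> \<phi> (\<lambda>x. g x + h x) \<le> \<phi> g + \<phi> h"
    and hom: "\<And>g c. g\<in>fr_dual p \<Longrightarrow> c \<ge> 0 \<Longrightarrow> \<phi> (\<lambda>x. c * g x) = c * \<phi> g"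
    and dom: "\<And>g. g\<in>fr_dual p \<Longrightarrow> \<phi> g \<le> supp_fun g K"
    and f: "f \<in> fr_dual p"
  shows "\<exists>x\<in>K. (\<forall>g\<in>fr_dual p. g x \<le> \<phi> g) \<and> \<phi> f \<le> f x"
proof (rule ccontr)
  assume nex: "\<not> ?thesis"
  define X where "X = fr_top p"
  define Bf where "Bf = {x\<in>topspace X. \<phi> f \<le> f x}"
  define Ag where "Ag g = {x\<in>topspace X. g x \<le> \<phi> g}" for g
  define U where "U = insert Bf (Ag ` fr_dual p)"
  have Ktop: "K \<subseteq> topspace X" using compactin_subset_topspace K(1) X_def by blast
  have clo: "\<forall>C\<in>U. closedin X C"
  proof
    fix C assume "C \<in> U"
    then consider "C = Bf" | g where "g \<in> fr_dual p" "C = Ag g" unfolding U_def by auto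
    then show "closedin X C"
    proof cases
      case 1 then show ?thesis unfolding Bf_def X_def
        using closedin_continuous_map_preimage[OF dual_cont[OF f], of "{\<phi> f..}"] by auto
    next
      case 2 then show ?thesis unfolding Ag_def X_def
        using closedin_continuous_map_preimage[OF dual_cont[OF 2(1)], of "{..\<phi> g}"] by auto
    qed
  qed
  have "K \<inter> \<Inter>U = {}"
  proof (rule ccontr)
    assume "K \<inter> \<Inter>U \<noteq> {}"
    then obtain x where x: "x \<in> K" "x \<in> \<Inter>U" by blast
    then have "\<phi> f \<le> f x" "\<forall>g\<in>fr_dual p. g x \<le> \<phi> g" unfolding U_def Bf_def Ag_def by auto
    then show False using nex x(1) by blast
  qed
  then obtain FF where FF: "finite FF" "FF \<subseteq> U" "K \<inter> \<Inter>FF = {}"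
    using K(1) clo unfolding compactin_fip X_def by blast
  have "FF - {Bf} \<subseteq> Ag ` fr_dual p" using FF(2) unfolding U_def by auto
  then obtain G0 where G0: "G0 \<subseteq> fr_dual p" "finite G0" "FF - {Bf} = Ag ` G0"
    using finite_subset_image[of "FF - {Bf}" Ag "fr_dual p"] FF(1) by blast
  have cover: "f x < \<phi> f \<or> (\<exists>g\<in>G0. g x > \<phi> g)" if x: "x \<in> K" for x
  proof -
    from FF(3) x obtain C where C: "C \<in> FF" "x \<notin> C" by blast
    show ?thesis
    proof (cases "C = Bf")
      case True then show ?thesis using C x Ktop unfolding Bf_def by auto
    next
      case False
      then have "C \<in> Ag ` G0" using C G0(3) by blast
      then obtain g where g: "g \<in> G0" "C = Ag g" by blast
      then have "g x > \<phi> g" using C x Ktop unfolding Ag_def by auto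
      then show ?thesis using g(1) by blast
    qed
  qed
  define P where "P = {(g,c). g \<in> fr_dual p \<and> (\<exists>\<mu>\<ge>0. c \<le> \<mu> * \<phi> f - \<phi> (\<lambda>x. g x + \<mu> * f x))}"
  have Pdual: "\<And>g c. (g,c)\<in>P \<Longrightarrow> g \<in> fr_dual p" unfolding P_def by auto
  have Pconv: "((\<lambda>x. t * g x + (1-t) * h x), t*c + (1-t)*d) \<in> P"
    if gP: "(g,c)\<in>P" and hP: "(h,d)\<in>P" and t: "t\<in>{0..1}" for g c h d t
  proof -
    from gP obtain \<mu> where g: "g \<in> fr_dual p" "\<mu> \<ge> 0" "c \<le> \<mu> * \<phi> f - \<phi> (\<lambda>x. g x + \<mu> * f x)"
      unfolding P_def by auto
    from hP obtain \<nu> where h: "h \<in> fr_dual p" "\<nu> \<ge> 0" "d \<le> \<nu> * \<phi> f - \<phi> (\<lambda>x. h x + \<nu> * f x)"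
      unfolding P_def by auto
    have t0: "t \<ge> 0" "1 - t \<ge> 0" using t by auto
    define g' where "g' = (\<lambda>x. g x + \<mu> * f x)"
    define h' where "h' = (\<lambda>x. h x + \<nu> * f x)"
    have g'd: "g' \<in> fr_dual p" unfolding g'_def by (intro dual_add dual_scale g f)
    have h'd: "h' \<in> fr_dual p" unfolding h'_def by (intro dual_add dual_scale h f)
    define \<rho> where "\<rho> = t * \<mu> + (1-t) * \<nu>"
    have \<rho>: "\<rho> \<ge> 0" unfolding \<rho>_def using t0 g(2) h(2) by simp
    have eq: "(\<lambda>x. t * g x + (1-t) * h x + \<rho> * f x) = (\<lambda>x. (\<lambda>x. t * g' x) x + (\<lambda>x. (1-t) * h' x) x)"
      unfolding g'_def h'_def \<rho>_def by (simp add: algebra_simps)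
    have "\<phi> (\<lambda>x. t * g x + (1-t) * h x + \<rho> * f x) \<le> \<phi> (\<lambda>x. t * g' x) + \<phi> (\<lambda>x. (1-t) * h' x)"
      unfolding eq by (intro sub dual_scale g'd h'd)
    also have "\<dots> = t * \<phi> g' + (1-t) * \<phi> h'" using hom[OF g'd t0(1)] hom[OF h'd t0(2)] by simp
    finally have 1: "\<phi> (\<lambda>x. t * g x + (1-t) * h x + \<rho> * f x) \<le> t * \<phi> g' + (1-t) * \<phi> h'" .
    have "t * c \<le> t * (\<mu> * \<phi> f - \<phi> g')" using g(3) t0 unfolding g'_def by (simp add: mult_left_mono)
    moreover have "(1-t) * d \<le> (1-t) * (\<nu> * \<phi> f - \<phi> h')" using h(3) t0 unfolding h'_def by (simp add: mult_left_mono)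
    ultimately have "t*c + (1-t)*d \<le> \<rho> * \<phi> f - \<phi> (\<lambda>x. t * g x + (1-t) * h x + \<rho> * f x)"
      using 1 unfolding \<rho>_def by (simp add: algebra_simps)
    moreover have "(\<lambda>x. t * g x + (1-t) * h x) \<in> fr_dual p" by (intro dual_add dual_scale g h)
    ultimately show ?thesis unfolding P_def using \<rho> by auto
  qed
  have phi0: "\<phi> (\<lambda>x. 0) = 0" using hom[OF f, of 0] by simp
  define S where "S = insert ((\<lambda>x. - f x), \<phi> f) ((\<lambda>g. (g, - \<phi> g)) ` G0)"
  have SP: "S \<subseteq> P"
  proof
    fix e assume "e \<in> S"
    then consider "e = ((\<lambda>x. - f x), \<phi> f)" | g where "g \<in> G0" "e = (g, - \<phi> g)" unfolding S_def by auto
    then show "e \<in> P"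
    proof cases
      case 1
      have "(\<lambda>x. - f x + 1 * f x) = (\<lambda>x. 0)" by simp
      then have "\<phi> f \<le> 1 * \<phi> f - \<phi> (\<lambda>x. - f x + 1 * f x)" using phi0 by simp
      moreover have "(\<lambda>x. - f x) \<in> fr_dual p" using dual_scale[OF f, of "-1"] by simp
      ultimately show ?thesis unfolding 1 P_def by (auto intro!: exI[of _ 1])
    next
      case 2
      have "- \<phi> g \<le> 0 * \<phi> f - \<phi> (\<lambda>x. g x + 0 * f x)" by simp
      then show ?thesis unfolding 2 P_def using 2(1) G0(1) by (auto intro!: exI[of _ 0])
    qed
  qed
  have Spos: "\<forall>x\<in>K. \<exists>(g,c)\<in>S. g x + c > 0"
  proof
    fix x assume x: "x \<in> K"
    from cover[OF x] show "\<exists>(g,c)\<in>S. g x + c > 0"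
    proof
      assume "f x < \<phi> f" then show ?thesis unfolding S_def by auto
    next
      assume "\<exists>g\<in>G0. g x > \<phi> g" then show ?thesis unfolding S_def by auto
    qed
  qed
  have fS: "finite S" "S \<noteq> {}" using G0(2) unfolding S_def by auto
  have "\<exists>(g,c)\<in>P. \<forall>x\<in>K. g x + c > 0"
    apply (rule minimax[where P=P and p=p and S=S and K=K])
    subgoal by (rule Pconv)
    subgoal by (rule Pdual)
    using fS SP K Spos by auto
  then obtain g c where gc: "(g,c) \<in> P" "\<forall>x\<in>K. g x + c > 0" by blast
  from gc(1) obtain \<mu> where g: "g \<in> fr_dual p" "\<mu> \<ge> 0" "c \<le> \<mu> * \<phi> f - \<phi> (\<lambda>x. g x + \<mu> * f x)"
    unfolding P_def by auto
  have ng: "(\<lambda>x. - g x) \<in> fr_dual p" using dual_scale[OF g(1), of "-1"] by simp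
  obtain x0 where x0: "x0 \<in> K" "\<And>y. y \<in> K \<Longrightarrow> - g y \<le> - g x0"
    using attain_max[OF K(1,3) cont_sub[OF dual_cont[OF ng]]] by blast
  have "supp_fun (\<lambda>x. - g x) K = - g x0" unfolding supp_fun_def
    by (rule cSup_eq_maximum) (use x0 in auto)
  then have 1: "\<phi> (\<lambda>x. - g x) < c" using dom[OF ng] gc(2) x0(1) by fastforce
  have gm: "(\<lambda>x. g x + \<mu> * f x) \<in> fr_dual p" by (intro dual_add dual_scale g(1) f)
  have "\<phi> (\<lambda>x. (\<lambda>x. - g x) x + (\<lambda>x. g x + \<mu> * f x) x) \<le> \<phi> (\<lambda>x. - g x) + \<phi> (\<lambda>x. g x + \<mu> * f x)"
    by (rule sub[OF ng gm])
  moreover have "(\<lambda>x. (\<lambda>x. - g x) x + (\<lambda>x. g x + \<mu> * f x) x) = (\<lambda>x. \<mu> * f x)" by simp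
  ultimately have "\<mu> * \<phi> f \<le> \<phi> (\<lambda>x. - g x) + \<phi> (\<lambda>x. g x + \<mu> * f x)" using hom[OF f g(2)] by simp
  then show False using 1 g(3) by simp
qed


lemma supp_set:
  assumes K: "compactin (fr_top p) K" "convex K" "K \<noteq> {}"
    and sub: "\<And>g h. g\<in>fr_dual p \<Longrightarrow> h\<in>fr_dual p \<Longrightarrow> \<phi> (\<lambda>x. g x + h x) \<le> \<phi> g + \<phi> h"
    and hom: "\<And>g c. g\<in>fr_dual p \<Longrightarrow> c \<ge> 0 \<Longrightarrow> \<phi> (\<lambda>x. c * g x) = c * \<phi> g"
    and dom: "\<And>g. g\<in>fr_dual p \<Longrightarrow> \<phi> g \<le> supp_fun g K"
  shows "\<exists>C\<in>ck p. \<forall>f\<in>fr_dual p. supp_fun f C = \<phi> f"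
proof -
  define C where "C = {x\<in>K. \<forall>g\<in>fr_dual p. g x \<le> \<phi> g}"
  have att: "\<exists>x\<in>C. \<phi> f \<le> f x" if f: "f \<in> fr_dual p" for f
    using supp_attain[OF K sub hom dom f] unfolding C_def by blast
  have ne: "C \<noteq> {}" using att[OF dual_zero] by blast
  have Ktop: "K \<subseteq> topspace (fr_top p)" using compactin_subset_topspace K(1) by blast
  have Ceq: "C = K \<inter> \<Inter>((\<lambda>g. {x\<in>topspace (fr_top p). g x \<in> {..\<phi> g}}) ` fr_dual p)"
    unfolding C_def using Ktop dual_zero by auto
  have "closedin (fr_top p) (\<Inter>((\<lambda>g. {x\<in>topspace (fr_top p). g x \<in> {..\<phi> g}}) ` fr_dual p))"
    apply (rule closedin_Inter)
    using dual_zero apply blast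
  proof (clarify)
    fix g assume g: "g \<in> fr_dual p"
    show "closedin (fr_top p) {x \<in> topspace (fr_top p). g x \<in> {..\<phi> g}}"
      using closedin_continuous_map_preimage[OF dual_cont[OF g], of "{..\<phi> g}"] by simp
  qed
  then have comp: "compactin (fr_top p) C" unfolding Ceq by (rule compact_Int_closedin[OF K(1)])
  have conv: "convex C"
    unfolding convex_def
  proof (intro ballI allI impI)
    fix x y and s t :: real
    assume x: "x \<in> C" and y: "y \<in> C" and st: "0 \<le> s" "0 \<le> t" "s + t = 1"
    have "s *\<^sub>R x + t *\<^sub>R y \<in> K" using K(2) x y st unfolding C_def by (simp add: convex_def)
    moreover have "g (s *\<^sub>R x + t *\<^sub>R y) \<le> \<phi> g" if g: "g \<in> fr_dual p" for g
    proof -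
      have lin: "linear g" using dual_lin[OF g] .
      have "g (s *\<^sub>R x + t *\<^sub>R y) = s * g x + t * g y"
        unfolding linear_add[OF lin] linear_scale[OF lin] by simp
      also have "\<dots> \<le> s * \<phi> g + t * \<phi> g"
        using x y g st unfolding C_def by (intro add_mono mult_left_mono) auto
      also have "\<dots> = \<phi> g" using st by (simp add: algebra_simps flip: distrib_right)
      finally show ?thesis .
    qed
    ultimately show "s *\<^sub>R x + t *\<^sub>R y \<in> C" unfolding C_def by blast
  qed
  have "C \<in> ck p" unfolding ck_def using ne comp conv by blast
  moreover have "supp_fun f C = \<phi> f" if f: "f \<in> fr_dual p" for f
  proof -
    obtain x where x: "x \<in> C" "\<phi> f \<le> f x" using att[OF f] by blast
    have "f x \<le> \<phi> f" using x(1) f unfolding C_def by auto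
    then have "f x = \<phi> f" using x(2) by simp
    then have "\<phi> f \<in> f ` C" using x(1) by (metis image_eqI)
    then show ?thesis unfolding supp_fun_def
      by (intro cSup_eq_maximum) (use f in \<open>auto simp: C_def\<close>)
  qed
  ultimately show ?thesis by blast
qed


lemma ck_bdd:
  assumes C: "C \<in> ck p" and g: "g \<in> fr_dual p"
  shows "bdd_above (g ` C)"
proof -
  have "compactin (fr_top p) C" using C by (simp add: ck_def)
  then have "compactin euclideanreal (g ` C)" using image_compactin dual_cont[OF g] by blast
  then have "compact (g ` C)" by simp
  moreover have "g ` C \<noteq> {}" using C by (auto simp: ck_def)
  ultimately obtain m where "m \<in> g ` C" "\<forall>y\<in>g ` C. y \<le> m" using compact_attains_sup by blast
  then show ?thesis by (auto intro: bdd_aboveI)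
qed

lemma ck_ne: "C \<in> ck p \<Longrightarrow> C \<noteq> {}" by (simp add: ck_def)

lemma supp_upper: "C \<in> ck p \<Longrightarrow> g \<in> fr_dual p \<Longrightarrow> x \<in> C \<Longrightarrow> g x \<le> supp_fun g C"
  unfolding supp_fun_def by (rule cSUP_upper) (auto intro: ck_bdd)

lemma supp_add:
  assumes C: "C \<in> ck p" and g: "g \<in> fr_dual p" and h: "h \<in> fr_dual p"
  shows "supp_fun (\<lambda>x. g x + h x) C \<le> supp_fun g C + supp_fun h C"
  unfolding supp_fun_def
proof (rule cSUP_least)
  show "C \<noteq> {}" using ck_ne[OF C] .
  fix x assume x: "x \<in> C"
  show "g x + h x \<le> (SUP x\<in>C. g x) + (SUP x\<in>C. h x)"
    using supp_upper[OF C g x] supp_upper[OF C h x] unfolding supp_fun_def by (rule add_mono)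
qed

lemma supp_scale:
  assumes C: "C \<in> ck p" and g: "g \<in> fr_dual p" and c: "c \<ge> 0"
  shows "supp_fun (\<lambda>x. c * g x) C = c * supp_fun g C"
proof (cases "c = 0")
  case True then show ?thesis using ck_ne[OF C] by (simp add: supp_fun_def)
next
  case False
  then have c0: "c > 0" using c by simp
  have cg: "(\<lambda>x. c * g x) \<in> fr_dual p" by (rule dual_scale[OF g])
  have 1: "supp_fun (\<lambda>x. c * g x) C \<le> c * supp_fun g C"
    unfolding supp_fun_def
  proof (rule cSUP_least)
    show "C \<noteq> {}" using ck_ne[OF C] .
    fix x assume x: "x \<in> C"
    show "c * g x \<le> c * (SUP x\<in>C. g x)"
      using supp_upper[OF C g x] c unfolding supp_fun_def by (rule mult_left_mono)
  qed
  have "supp_fun g C \<le> supp_fun (\<lambda>x. c * g x) C / c"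
    unfolding supp_fun_def
  proof (rule cSUP_least)
    show "C \<noteq> {}" using ck_ne[OF C] .
    fix x assume x: "x \<in> C"
    have "c * g x \<le> (SUP x\<in>C. c * g x)" using supp_upper[OF C cg x] unfolding supp_fun_def .
    then show "g x \<le> (SUP x\<in>C. c * g x) / c" using c0 by (simp add: field_simps)
  qed
  then have "c * supp_fun g C \<le> supp_fun (\<lambda>x. c * g x) C" using c0 by (simp add: field_simps)
  then show ?thesis using 1 by simp
qed

lemma supp_mono:
  assumes "C \<in> ck p" "D \<in> ck p" "C \<subseteq> D" "g \<in> fr_dual p"
  shows "supp_fun g C \<le> supp_fun g D"
  unfolding supp_fun_def
  by (rule cSUP_subset_mono) (use assms ck_ne ck_bdd in auto)

lemma supp_lower:
  assumes "C \<in> ck p" "D \<in> ck p" "C \<subseteq> D" "g \<in> fr_dual p"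
  shows "- supp_fun (\<lambda>x. - g x) D \<le> supp_fun g C"
proof -
  obtain x where x: "x \<in> C" using ck_ne[OF assms(1)] by blast
  have ng: "(\<lambda>x. - g x) \<in> fr_dual p" using dual_scale[OF assms(4), of "-1"] by simp
  have "- g x \<le> supp_fun (\<lambda>x. - g x) D" using supp_upper[OF assms(2) ng] x assms(3) by blast
  moreover have "g x \<le> supp_fun g C" using supp_upper[OF assms(1,4) x] .
  ultimately show ?thesis by simp
qed

theorem corollary4p7:
  fixes p :: "nat \<Rightarrow> 'a::real_vector \<Rightarrow> real"
    and \<Gamma> G :: "real \<Rightarrow> 'a set"
  assumes "frechet p"
    and "pettis_ck p \<Gamma>"
    and "\<forall>t\<in>{0..1}. G t \<in> ck p"
    and "scalarly_measurable p G"
    and "\<forall>t\<in>{0..1}. G t \<subseteq> \<Gamma> t"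
  shows "pettis_ck p G"
proof -
  have \<Gamma>ck: "\<forall>t\<in>{0..1}. \<Gamma> t \<in> ck p"
    and \<Gamma>int: "\<And>g. g\<in>fr_dual p \<Longrightarrow> set_integrable lebesgue {0..1} (\<lambda>t. supp_fun g (\<Gamma> t))"
    and \<Gamma>E: "\<And>E. E \<in> sets lebesgue \<Longrightarrow> E \<subseteq> {0..1} \<Longrightarrow>
        (\<exists>C\<in>ck p. \<forall>f\<in>fr_dual p. supp_fun f C = (LINT t:E|lebesgue. supp_fun f (\<Gamma> t)))"
    using assms(2) unfolding pettis_ck_def by auto
  have Gck: "\<And>t. t \<in> {0..1} \<Longrightarrow> G t \<in> ck p" using assms(3) by blast
  have sub: "\<And>t. t \<in> {0..1} \<Longrightarrow> G t \<subseteq> \<Gamma> t" using assms(5) by blast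
  have Gint: "set_integrable lebesgue {0..1} (\<lambda>t. supp_fun g (G t))" if g: "g \<in> fr_dual p" for g
  proof -
    have ng: "(\<lambda>x. - g x) \<in> fr_dual p" using dual_scale[OF g, of "-1"] by simp
    have "set_integrable lebesgue {0..1} (\<lambda>t. \<bar>supp_fun g (\<Gamma> t)\<bar> + \<bar>supp_fun (\<lambda>x. - g x) (\<Gamma> t)\<bar>)"
      by (intro set_integral_add(1) set_integrable_abs \<Gamma>int g ng)
    moreover have "set_borel_measurable lebesgue {0..1} (\<lambda>t. supp_fun g (G t))"
    proof -
      have "(\<lambda>t. supp_fun g (G t)) \<in> borel_measurable (restrict_space lebesgue {0..1})"
        using assms(4) g unfolding scalarly_measurable_def by blast
      then show ?thesis unfolding set_borel_measurable_def
        by (subst (asm) borel_measurable_restrict_space_iff) auto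
    qed
    moreover have "AE x in lebesgue. x \<in> {0..1} \<longrightarrow> norm (supp_fun g (G x))
        \<le> norm (\<bar>supp_fun g (\<Gamma> x)\<bar> + \<bar>supp_fun (\<lambda>x. - g x) (\<Gamma> x)\<bar>)"
    proof (intro AE_I2 impI)
      fix t :: real assume t: "t \<in> {0..1}"
      have "supp_fun g (G t) \<le> supp_fun g (\<Gamma> t)"
        using supp_mono[OF Gck[OF t] \<Gamma>ck[rule_format, OF t] sub[OF t] g] .
      moreover have "- supp_fun (\<lambda>x. - g x) (\<Gamma> t) \<le> supp_fun g (G t)"
        using supp_lower[OF Gck[OF t] \<Gamma>ck[rule_format, OF t] sub[OF t] g] .
      ultimately show "norm (supp_fun g (G t))
        \<le> norm (\<bar>supp_fun g (\<Gamma> t)\<bar> + \<bar>supp_fun (\<lambda>x. - g x) (\<Gamma> t)\<bar>)" by simp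
    qed
    ultimately show ?thesis by (rule set_integrable_bound)
  qed
  have Eprop: "\<exists>C\<in>ck p. \<forall>f\<in>fr_dual p. supp_fun f C = (LINT t:E|lebesgue. supp_fun f (G t))"
    if E: "E \<in> sets lebesgue" "E \<subseteq> {0..1}" for E
  proof -
    obtain K where K: "K \<in> ck p" "\<And>f. f\<in>fr_dual p \<Longrightarrow> supp_fun f K = (LINT t:E|lebesgue. supp_fun f (\<Gamma> t))"
      using \<Gamma>E[OF E] by blast
    define \<phi> where "\<phi> g = (LINT t:E|lebesgue. supp_fun g (G t))" for g
    have GintE: "\<And>g. g \<in> fr_dual p \<Longrightarrow> set_integrable lebesgue E (\<lambda>t. supp_fun g (G t))"
      using set_integrable_subset[OF Gint E(1,2)] by blast
    have \<Gamma>intE: "\<And>g. g \<in> fr_dual p \<Longrightarrow> set_integrable lebesgue E (\<lambda>t. supp_fun g (\<Gamma> t))"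
      using set_integrable_subset[OF \<Gamma>int E(1,2)] by blast
    have Kc: "compactin (fr_top p) K" "convex K" "K \<noteq> {}" using K(1) by (auto simp: ck_def)
    have "\<exists>C\<in>ck p. \<forall>f\<in>fr_dual p. supp_fun f C = \<phi> f"
    proof (rule supp_set[OF Kc])
      fix g h assume g: "g \<in> fr_dual p" and h: "h \<in> fr_dual p"
      have gh: "(\<lambda>x. g x + h x) \<in> fr_dual p" by (rule dual_add[OF g h])
      have "\<phi> (\<lambda>x. g x + h x) \<le> (LINT t:E|lebesgue. supp_fun g (G t) + supp_fun h (G t))"
        unfolding \<phi>_def
        by (rule set_integral_mono[OF GintE[OF gh] set_integral_add(1)[OF GintE[OF g] GintE[OF h]]])
           (use E(2) supp_add[OF Gck g h] in blast)
      also have "\<dots> = \<phi> g + \<phi> h" unfolding \<phi>_def by (rule set_integral_add(2)[OF GintE[OF g] GintE[OF h]])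
      finally show "\<phi> (\<lambda>x. g x + h x) \<le> \<phi> g + \<phi> h" .
    next
      fix g and c :: real assume g: "g \<in> fr_dual p" and c: "c \<ge> 0"
      have "\<phi> (\<lambda>x. c * g x) = (LINT t:E|lebesgue. c * supp_fun g (G t))"
        unfolding \<phi>_def
        by (rule set_lebesgue_integral_cong[OF E(1)]) (use E(2) supp_scale[OF Gck g c] in blast)
      then show "\<phi> (\<lambda>x. c * g x) = c * \<phi> g" by (simp add: \<phi>_def)
    next
      fix g assume g: "g \<in> fr_dual p"
      have "\<phi> g \<le> (LINT t:E|lebesgue. supp_fun g (\<Gamma> t))"
        unfolding \<phi>_def
        by (rule set_integral_mono[OF GintE[OF g] \<Gamma>intE[OF g]])
           (use E(2) supp_mono[OF Gck \<Gamma>ck[rule_format] sub g] in blast)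
      then show "\<phi> g \<le> supp_fun g K" using K(2)[OF g] by simp
    qed
    then show ?thesis by (simp add: \<phi>_def)
  qed
  show ?thesis unfolding pettis_ck_def using assms(3) Gint Eprop by blast
qed

end
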